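(* Let $\tilde A\in\widetilde{SL}(2,\mathbb R)_+$ and let $a<b$ be fixed points of $\tilde A$ such that $\tilde A(x)>x$ for all $x\in U:=(a,b)$. Then every other interval $U'=(a',b')$ with the same property ($a'<b'$ fixed points of $\tilde A$ with $\tilde A(x)>x$ for all $x\in U'$) is of the form $U'=(a+k\pi,b+k\pi)$ for some $k\in\mathbb Z$. Moreover, the projective curves $U/\langle\tilde A\rangle$ and $U'/\langle\tilde A\rangle$ are isomorphic.
   Context: Let $\pi:\mathbb R\to\mathbb{RP}^1$, $\pi(t)=[\cos t:\sin t]$, and $\bar\pi(t)=(\cos t,\sin t)\in S^1$; $SL(2,\mathbb R)$ acts on $S^1$ by $A\cdot v=Av/\|Av\|$. The universal cover $\widetilde{SL}(2,\mathbb R)$ is realized as the group of diffeomorphisms $\tilde A$ of $\mathbb R$ for which there exists $A\in SL(2,\mathbb R)$ with $\bar\pi\circ\tilde A=A\cdot\bar\pi$. $\widetilde{SL}(2,\mathbb R)_+$ denotes the set of $\tilde A\in\widetilde{SL}(2,\mathbb R)$ such that $\tilde A(x)>x$ for at least one $x\in\mathbb R$. Intervals of $\mathbb R$ carry the projective structure pulled back from $\mathbb{RP}^1$ by $\pi$; elements of $\widetilde{SL}(2,\mathbb R)$ act by projective maps, and $\langle\tilde A\rangle$ acts freely and properly on $U$, so $U/\langle\tilde A\rangle$ is a closed projective curve. *)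

theory Defs
  imports "HOL-Analysis.Analysis"
begin

definition pibar :: "real \<Rightarrow> real^2" where
  "pibar t = (\<chi> i. if i = 1 then cos t else sin t)"

definition sl_act :: "real^2^2 \<Rightarrow> real^2 \<Rightarrow> real^2" where
  "sl_act A v = (1 / norm (A *v v)) *\<^sub>R (A *v v)"

definition diffeo_R :: "(real \<Rightarrow> real) \<Rightarrow> bool" where
  "diffeo_R f \<longleftrightarrow> bij f \<and> (\<forall>x. f differentiable (at x)) \<and> (\<forall>x. inv f differentiable (at x))"

text \<open>Elements of the universal cover $\widetilde{SL}(2,\mathbb R)$, realized as diffeomorphisms of $\mathbb R$.\<close>
definition tildeSL :: "(real \<Rightarrow> real) \<Rightarrow> bool" where
  "tildeSL f \<longleftrightarrow> diffeo_R f \<and>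
     (\<exists>A::real^2^2. det A = 1 \<and> (\<forall>t. pibar (f t) = sl_act A (pibar t)))"

definition tildeSL_plus :: "(real \<Rightarrow> real) \<Rightarrow> bool" where
  "tildeSL_plus f \<longleftrightarrow> tildeSL f \<and> (\<exists>x. f x > x)"

text \<open>Two nonzero vectors represent the same point of $\mathbb{RP}^1$.\<close>
definition proj_eq :: "real^2 \<Rightarrow> real^2 \<Rightarrow> bool" where
  "proj_eq u v \<longleftrightarrow> (\<exists>c. c \<noteq> 0 \<and> u = c *\<^sub>R v)"

text \<open>A map $g$ defined on an open set $V\subseteq\mathbb R$ is projective (for the structure pulled back
  from $\mathbb{RP}^1$ by $\pi$) if locally it is continuous and covers a projective transformation of
  $\mathbb{RP}^1$, i.e. $\pi \circ g = M \circ \pi$ near every point, with $M \in GL(2,\mathbb R)$.\<close>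
definition proj_map_on :: "real set \<Rightarrow> (real \<Rightarrow> real) \<Rightarrow> bool" where
  "proj_map_on V g \<longleftrightarrow> open V \<and>
     (\<forall>x\<in>V. \<exists>W. open W \<and> x \<in> W \<and> W \<subseteq> V \<and> continuous_on W g \<and>
        (\<exists>M::real^2^2. det M \<noteq> 0 \<and> (\<forall>t\<in>W. proj_eq (pibar (g t)) (M *v pibar t))))"

definition iter_int :: "(real \<Rightarrow> real) \<Rightarrow> int \<Rightarrow> real \<Rightarrow> real" where
  "iter_int f n = (if 0 \<le> n then f ^^ nat n else inv f ^^ nat (- n))"

definition orbit :: "(real \<Rightarrow> real) \<Rightarrow> real \<Rightarrow> real set" where
  "orbit f x = range (\<lambda>n. iter_int f n x)"

text \<open>The points of the quotient curve $U/\langle f\rangle$ are the orbits of points of $U$.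
  A map $F : U/\langle f\rangle \to U'/\langle f\rangle$ is projective if it is locally induced by
  projective maps $U \supseteq W \to U'$ (the charts of the quotient being induced from $U$).\<close>
definition proj_quot_map ::
  "(real \<Rightarrow> real) \<Rightarrow> real set \<Rightarrow> real set \<Rightarrow> (real set \<Rightarrow> real set) \<Rightarrow> bool" where
  "proj_quot_map f U U' F \<longleftrightarrow>
     (\<forall>x\<in>U. \<exists>W g. x \<in> W \<and> W \<subseteq> U \<and> g ` W \<subseteq> U' \<and> proj_map_on W g \<and>
        (\<forall>y\<in>W. F (orbit f y) = orbit f (g y)))"

definition proj_curves_iso :: "(real \<Rightarrow> real) \<Rightarrow> real set \<Rightarrow> real set \<Rightarrow> bool" where
  "proj_curves_iso f U U' \<longleftrightarrow>
     (\<exists>F. bij_betw F (orbit f ` U) (orbit f ` U') \<and> proj_quot_map f U U' F \<and>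
          proj_quot_map f U' U (inv_into (orbit f ` U) F))"

end

theory Submission
  imports Defs
begin

lemma pibar_comp: "pibar t $ 1 = cos t" "pibar t $ 2 = sin t"
  by (simp_all add: pibar_def)

lemma mv_comp: "((A::real^2^2) *v v) $ 1 = A$1$1 * v$1 + A$1$2 * v$2"
  "((A::real^2^2) *v v) $ 2 = A$2$1 * v$1 + A$2$2 * v$2"
  by (simp_all add: matrix_vector_mult_def sum_2)

lemma vec2_eq: "((u::real^2) = v) \<longleftrightarrow> u$1 = v$1 \<and> u$2 = v$2"
  by (simp add: vec_eq_iff forall_2)

lemma act_comp:
  assumes "det A = 1" "pibar y = sl_act A (pibar t)"
  shows "norm (A *v pibar t) > 0"
    "cos y = (A$1$1 * cos t + A$1$2 * sin t) / norm (A *v pibar t)"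
    "sin y = (A$2$1 * cos t + A$2$2 * sin t) / norm (A *v pibar t)"
proof -
  have d: "A$1$1 * A$2$2 - A$1$2 * A$2$1 = 1" using assms(1) by (simp add: det_2)
  show n: "norm (A *v pibar t) > 0"
  proof (rule ccontr)
    assume "\<not> ?thesis"
    hence "A *v pibar t = 0" by simp
    hence e1: "A$1$1 * cos t + A$1$2 * sin t = 0" and e2: "A$2$1 * cos t + A$2$2 * sin t = 0"
      by (simp_all add: vec2_eq mv_comp pibar_comp)
    have "cos t = A$2$2 * (A$1$1 * cos t + A$1$2 * sin t) - A$1$2 * (A$2$1 * cos t + A$2$2 * sin t)"
      using d by algebra
    hence c: "cos t = 0" using e1 e2 by simp
    have "sin t = A$1$1 * (A$2$1 * cos t + A$2$2 * sin t) - A$2$1 * (A$1$1 * cos t + A$1$2 * sin t)"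
      using d by algebra
    hence "sin t = 0" using e1 e2 by simp
    with c show False using sin_cos_squared_add[of t] by simp
  qed
  from assms(2) have "pibar y $ 1 = sl_act A (pibar t) $ 1" "pibar y $ 2 = sl_act A (pibar t) $ 2" by auto
  thus "cos y = (A$1$1 * cos t + A$1$2 * sin t) / norm (A *v pibar t)"
    "sin y = (A$2$1 * cos t + A$2$2 * sin t) / norm (A *v pibar t)"
    by (simp_all add: sl_act_def pibar_comp mv_comp)
qed

lemma eig_contra:
  fixes p q r s c1 s1 c2 s2 l m :: real
  assumes d: "p* s - q*r = 1" and e1: "p*c1 + q* s1 = l*c1" and e2: "r*c1 + s* s1 = l* s1"
    and e3: "p*c2 + q* s2 = -m*c2" and e4: "r*c2 + s* s2 = -m* s2"
    and l: "l > 0" and m: "m > 0" and u1: "c1^2 + s1^2 = 1" and u2: "c2^2+s2^2 = 1"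
  shows False
proof -
  define D where "D = c1* s2 - s1*c2"
  have "(p*c1 + q* s1)*(r*c2 + s* s2) - (r*c1 + s* s1)*(p*c2 + q* s2) = (p* s - q*r)*D"
    unfolding D_def by algebra
  hence "(l*c1)*(-m* s2) - (l* s1)*(-m*c2) = D" using d e1 e2 e3 e4 by simp
  hence "D * (1 + l*m) = 0" unfolding D_def by algebra
  moreover have "1 + l*m > 0" using l m by (simp add: add_pos_pos)
  ultimately have D0: "D = 0" by simp
  have "(p*c1 + q* s1)*c2 + (r*c1 + s* s1)* s2 - ((p*c2 + q* s2)*c1 + (r*c2 + s* s2)* s1) = (r - q) * D"
    unfolding D_def by algebra
  hence "l*(c1*c2+s1* s2) + m*(c1*c2+s1* s2) = 0" using D0 e1 e2 e3 e4 by algebra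
  hence "(l+m)*(c1*c2+s1* s2) = 0" by algebra
  hence E: "c1*c2+s1* s2 = 0" using l m by simp
  have "(c1*c2+s1* s2)^2 + D^2 = (c1^2+s1^2)*(c2^2+s2^2)" unfolding D_def by algebra
  thus False using E D0 u1 u2 by simp
qed

lemma left_end:
  fixes al be ga a b :: real
  assumes "a < b" "al + be * cos (2*a) + ga * sin (2*a) = 0"
    "\<forall>x\<in>{a<..<b}. al + be * cos (2*x) + ga * sin (2*x) > 0"
  shows "ga * cos (2*a) - be * sin (2*a) \<ge> 0"
proof (rule ccontr)
  define Q where "Q = (\<lambda>t::real. al + be * cos (2*t) + ga * sin (2*t))"
  assume "\<not> ?thesis"
  hence neg: "2 * (ga * cos (2*a) - be * sin (2*a)) < 0" by simp
  have D: "(Q has_real_derivative 2 * (ga * cos (2*a) - be * sin (2*a))) (at a)"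
    unfolding Q_def by (auto intro!: derivative_eq_intros simp: algebra_simps)
  from DERIV_neg_dec_right[OF D neg] obtain d where d: "d > 0" "\<forall>h>0. h < d \<longrightarrow> Q a > Q (a + h)" by blast
  define mm where "mm = min d (b - a)"
  define h where "h = mm / 2"
  have m1: "mm > 0" "mm \<le> d" "mm \<le> b - a" using d assms(1) by (auto simp: mm_def)
  have "h > 0" using m1 unfolding h_def by linarith
  have "h < d" using m1 d unfolding h_def by linarith
  have "a + h < b" using m1 unfolding h_def by linarith
  hence "a + h \<in> {a<..<b}" using \<open>h > 0\<close> by simp
  hence "Q (a + h) > 0" using assms(3) unfolding Q_def by blast
  moreover have "Q a > Q (a + h)" using d \<open>h > 0\<close> \<open>h < d\<close> by blast
  ultimately show False using assms(2) unfolding Q_def by linarith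
qed

lemma left_congr:
  fixes al be ga a b a' b' :: real
  assumes "a < b" "al + be * cos (2*a) + ga * sin (2*a) = 0"
    "\<forall>x\<in>{a<..<b}. al + be * cos (2*x) + ga * sin (2*x) > 0"
    "a' < b'" "al + be * cos (2*a') + ga * sin (2*a') = 0"
    "\<forall>x\<in>{a'<..<b'}. al + be * cos (2*x) + ga * sin (2*x) > 0"
  shows "\<exists>k::int. a' = a + of_int k * pi"
proof -
  have C1: "ga * cos (2*a) - be * sin (2*a) \<ge> 0" using left_end[OF assms(1-3)] .
  have C2: "ga * cos (2*a') - be * sin (2*a') \<ge> 0" using left_end[OF assms(4-6)] .
  have nz: "be^2 + ga^2 \<noteq> 0"
  proof
    assume "be^2 + ga^2 = 0"
    hence "be = 0" "ga = 0" by (auto simp: add_nonneg_eq_0_iff)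
    moreover have "(a+b)/2 \<in> {a<..<b}" using assms(1) by auto
    ultimately have "al = 0" "al > 0" using assms(2) assms(3)[rule_format, of "(a+b)/2"] by auto
    thus False by simp
  qed
  define X where "X = cos (2*a)" define Y where "Y = sin (2*a)"
  define X' where "X' = cos (2*a')" define Y' where "Y' = sin (2*a')"
  have u: "X^2 + Y^2 = 1" "X'^2 + Y'^2 = 1" by (simp_all add: X_def Y_def X'_def Y'_def)
  have dt: "be*X + ga*Y = -al" "be*X' + ga*Y' = -al" using assms(2,5)
    by (simp_all add: X_def Y_def X'_def Y'_def algebra_simps)
  have i1: "(be*X + ga*Y)^2 + (ga*X - be*Y)^2 = (be^2+ga^2)*(X^2+Y^2)" by algebra
  have i2: "(be*X' + ga*Y')^2 + (ga*X' - be*Y')^2 = (be^2+ga^2)*(X'^2+Y'^2)" by algebra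
  have "(ga*X - be*Y)^2 = (ga*X' - be*Y')^2" using i1 i2 u dt by simp
  moreover have "ga*X - be*Y \<ge> 0" "ga*X' - be*Y' \<ge> 0" using C1 C2 by (simp_all add: X_def Y_def X'_def Y'_def)
  ultimately have cr: "ga*X - be*Y = ga*X' - be*Y'" by (simp add: power2_eq_iff_nonneg)
  have "(be^2+ga^2) * X = be*(be*X + ga*Y) + ga*(ga*X - be*Y)" by algebra
  also have "\<dots> = be*(be*X' + ga*Y') + ga*(ga*X' - be*Y')" using dt cr by simp
  also have "\<dots> = (be^2+ga^2) * X'" by algebra
  finally have ex: "X = X'" by (rule mult_left_cancel[OF nz, THEN iffD1])
  have "(be^2+ga^2) * Y = ga*(be*X + ga*Y) - be*(ga*X - be*Y)" by algebra
  also have "\<dots> = ga*(be*X' + ga*Y') - be*(ga*X' - be*Y')" using dt cr by simp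
  also have "\<dots> = (be^2+ga^2) * Y'" by algebra
  finally have ey: "Y = Y'" by (rule mult_left_cancel[OF nz, THEN iffD1])
  have "cos (2*a' - 2*a) = X'*X + Y'*Y" by (simp add: cos_diff X_def Y_def X'_def Y'_def)
  also have "\<dots> = 1" using ex ey u by (simp add: power2_eq_square)
  finally obtain n::int where "2*a' - 2*a = of_int n * 2 * pi" using cos_one_2pi_int by blast
  hence "a' = a + of_int n * pi" by simp
  thus ?thesis by blast
qed

lemma Q_per:
  fixes al be ga :: real and k :: int
  shows "al + be * cos (2*(x + of_int k * pi)) + ga * sin (2*(x + of_int k * pi))
       = al + be * cos (2*x) + ga * sin (2*x)"
proof -
  have e: "2*(x + of_int k * pi) = 2*x + (2*pi) * of_int k" by (simp add: algebra_simps)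
  show ?thesis unfolding e cos_add sin_add by simp
qed

lemma inv_shift:
  assumes "bij f" "\<forall>x. f (x + c) = f x + (c::real)"
  shows "inv f (x + c) = inv f x + c"
proof -
  have "f (inv f x + c) = x + c" using assms by (simp add: bij_is_surj surj_f_inv_f)
  hence "inv f (x + c) = inv f (f (inv f x + c))" by simp
  also have "\<dots> = inv f x + c" using assms(1) by (simp add: bij_is_inj)
  finally show ?thesis .
qed

lemma funpow_shift:
  assumes "\<forall>x. g (x + c) = g x + (c::real)"
  shows "(g ^^ n) (x + c) = (g ^^ n) x + c"
  by (induction n) (simp_all add: assms)

lemma iter_shift:
  assumes "bij f" "\<forall>x. f (x + c) = f x + (c::real)"
  shows "iter_int f n (x + c) = iter_int f n x + c"
proof -
  have "\<forall>x. inv f (x + c) = inv f x + c" using inv_shift[OF assms] by blast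
  thus ?thesis using funpow_shift assms(2) unfolding iter_int_def by simp
qed

lemma orbit_shift:
  assumes "bij f" "\<forall>x. f (x + c) = f x + (c::real)"
  shows "orbit f (x + c) = (\<lambda>y. y + c) ` orbit f x"
  unfolding orbit_def image_image using iter_shift[OF assms] by simp

definition rotm :: "real \<Rightarrow> real^2^2" where
  "rotm c = (\<chi> i j. if i = 1 then (if j = 1 then cos c else - sin c) else (if j = 1 then sin c else cos c))"

lemma rotm_det: "det (rotm c) = 1"
  by (simp add: det_2 rotm_def power2_eq_square[symmetric])

lemma rotm_pibar: "pibar (t + c) = rotm c *v pibar t"
  by (simp add: vec2_eq mv_comp pibar_comp rotm_def cos_add sin_add algebra_simps)

lemma shift_proj: "open V \<Longrightarrow> proj_map_on V (\<lambda>y. y + c)"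
  unfolding proj_map_on_def
proof (intro conjI ballI, assumption)
  fix x assume "open V" "x \<in> V"
  show "\<exists>W. open W \<and> x \<in> W \<and> W \<subseteq> V \<and> continuous_on W (\<lambda>y. y + c) \<and>
        (\<exists>M::real^2^2. det M \<noteq> 0 \<and> (\<forall>t\<in>W. proj_eq (pibar (t + c)) (M *v pibar t)))"
    apply (rule exI[of _ V])
    using \<open>open V\<close> \<open>x \<in> V\<close>
    apply (auto intro!: continuous_intros exI[of _ "rotm c"] simp: rotm_det proj_eq_def rotm_pibar)
    done
qed

lemma iso_shift:
  fixes f :: "real \<Rightarrow> real"
  assumes "bij f" "\<forall>x. f (x + c) = f x + c" "open U" "U' = (\<lambda>y. y + c) ` U"
  shows "proj_curves_iso f U U'"
proof -
  define F where "F = (\<lambda>S. (\<lambda>y. y + c) ` (S::real set))"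
  have os: "\<And>x. F (orbit f x) = orbit f (x + c)" unfolding F_def using orbit_shift[OF assms(1,2)] by simp
  have injF: "inj_on F (orbit f ` U)" unfolding F_def
    by (rule inj_onI) (simp add: inj_image_eq_iff inj_on_def)
  have imF: "F ` (orbit f ` U) = orbit f ` U'" unfolding assms(4) image_image os by simp
  have bj: "bij_betw F (orbit f ` U) (orbit f ` U')" using injF imF by (simp add: bij_betw_def)
  have oU': "open U'" unfolding assms(4) using assms(3) open_translation[of U c]
    by (simp add: add.commute image_def)
  have m1: "proj_quot_map f U U' F" unfolding proj_quot_map_def
  proof
    fix x assume "x \<in> U"
    show "\<exists>W g. x \<in> W \<and> W \<subseteq> U \<and> g ` W \<subseteq> U' \<and> proj_map_on W g \<and> (\<forall>y\<in>W. F (orbit f y) = orbit f (g y))"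
      apply (rule exI[of _ U], rule exI[of _ "\<lambda>y. y + c"])
      using \<open>x \<in> U\<close> assms(3,4) shift_proj[OF assms(3)] os by auto
  qed
  have m2: "proj_quot_map f U' U (inv_into (orbit f ` U) F)" unfolding proj_quot_map_def
  proof
    fix x assume "x \<in> U'"
    have sub: "(\<lambda>y. y + - c) ` U' \<subseteq> U" unfolding assms(4) by auto
    have eq: "\<forall>y\<in>U'. inv_into (orbit f ` U) F (orbit f y) = orbit f (y + - c)"
    proof
      fix y assume "y \<in> U'"
      hence "y + - c \<in> U" using sub by auto
      thus "inv_into (orbit f ` U) F (orbit f y) = orbit f (y + - c)"
        by (intro inv_into_f_eq[OF injF]) (auto simp: os)
    qed
    show "\<exists>W g. x \<in> W \<and> W \<subseteq> U' \<and> g ` W \<subseteq> U \<and> proj_map_on W g \<and> (\<forall>y\<in>W. inv_into (orbit f ` U) F (orbit f y) = orbit f (g y))"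
      apply (rule exI[of _ U'], rule exI[of _ "\<lambda>y. y + - c"])
      using \<open>x \<in> U'\<close> sub shift_proj[OF oU', of "- c"] eq by auto
  qed
  show ?thesis unfolding proj_curves_iso_def using bj m1 m2 by blast
qed

lemma pibar_pi: "pibar (x + pi) = - pibar x"
  by (simp add: vec2_eq pibar_comp)

lemma mv_neg: "(A::real^2^2) *v (- v) = - (A *v v)"
  by (simp add: vec2_eq mv_comp)

lemma shift_int:
  assumes per: "\<forall>x. f (x + pi) = f x + pi"
  shows "f (x + of_int k * pi) = f x + of_int k * pi"
proof -
  have pos: "f (x + real n * pi) = f x + real n * pi" for n x
  proof (induction n)
    case (Suc n)
    have "f (x + real (Suc n) * pi) = f ((x + real n * pi) + pi)" by (simp add: algebra_simps)
    also have "\<dots> = f (x + real n * pi) + pi" using per by blast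
    finally show ?case using Suc by (simp add: algebra_simps)
  qed simp
  have neg: "f (x - real n * pi) = f x - real n * pi" for n x
  proof (induction n)
    case (Suc n)
    have "f (x - real n * pi) = f ((x - real (Suc n) * pi) + pi)" by (simp add: algebra_simps)
    also have "\<dots> = f (x - real (Suc n) * pi) + pi" using per by blast
    finally show ?case using Suc by (simp add: algebra_simps)
  qed simp
  show ?thesis
  proof (cases "k \<ge> 0")
    case True
    hence "k = int (nat k)" by simp
    then obtain n where "k = int n" by blast
    thus ?thesis using pos by simp
  next
    case False
    hence "k = - int (nat (- k))" by simp
    then obtain n where "k = - int n" by blast
    thus ?thesis using neg by simp
  qed
qed

theorem mainTheorem8:
  fixes f :: "real \<Rightarrow> real" and a b a' b' :: real
  assumes "tildeSL_plus f"
    and "a < b" and "f a = a" and "f b = b" and "\<forall>x\<in>{a<..<b}. f x > x"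
    and "a' < b'" and "f a' = a'" and "f b' = b'" and "\<forall>x\<in>{a'<..<b'}. f x > x"
  shows "(\<exists>k::int. {a'<..<b'} = {a + of_int k * pi<..<b + of_int k * pi})
         \<and> proj_curves_iso f {a<..<b} {a'<..<b'}"
proof -
  from assms(1) obtain A :: "real^2^2" where dA: "det A = 1" and act: "\<forall>t. pibar (f t) = sl_act A (pibar t)"
    and bf: "bij f" and df: "\<forall>x. f differentiable (at x)"
    unfolding tildeSL_plus_def tildeSL_def diffeo_R_def by blast
  have cont: "isCont f x" for x using df differentiable_imp_continuous_within by blast
  define p where "p = A$1$1" define q where "q = A$1$2"
  define r where "r = A$2$1" define w where "w = A$2$2"
  define N where "N = (\<lambda>t. norm (A *v pibar t))"
  have dA': "p * w - q * r = 1" using dA by (simp add: det_2 p_def q_def r_def w_def)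
  have Npos: "N t > 0" for t using act_comp[OF dA] act unfolding N_def by blast
  have cf: "cos (f t) = (p * cos t + q * sin t) / N t" for t
    using act_comp[OF dA] act unfolding N_def p_def q_def by blast
  have sf: "sin (f t) = (r * cos t + w * sin t) / N t" for t
    using act_comp[OF dA] act unfolding N_def r_def w_def by blast
  define al where "al = (r - q) / 2" define be where "be = (r + q) / 2" define ga where "ga = (w - p) / 2"
  define Q where "Q = (\<lambda>t::real. al + be * cos (2*t) + ga * sin (2*t))"
  have QS: "Q t = N t * sin (f t - t)" for t
  proof -
    have "sin (f t - t) = ((r * cos t + w * sin t) * cos t - (p * cos t + q * sin t) * sin t) / N t"
      using Npos[of t] by (simp add: sin_diff cf sf field_simps)
    moreover have "(r * cos t + w * sin t) * cos t - (p * cos t + q * sin t) * sin t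
       = (r - q)/2 * ((cos t)^2 + (sin t)^2) + (r+q)/2 * ((cos t)^2 - (sin t)^2) + (w - p)/2 * (2 * sin t * cos t)"
    proof -
      have "2 * ((r * cos t + w * sin t) * cos t - (p * cos t + q * sin t) * sin t)
       = (r - q) * ((cos t)^2 + (sin t)^2) + (r+q) * ((cos t)^2 - (sin t)^2) + (w - p) * (2 * sin t * cos t)"
        by algebra
      thus ?thesis by (simp add: field_simps)
    qed
    ultimately show ?thesis using Npos[of t]
      by (simp add: Q_def al_def be_def ga_def cos_double sin_double)
  qed
  have fixe: "p * cos x + q * sin x = N x * cos x" "r * cos x + w * sin x = N x * sin x" if "f x = x" for x
    using cf[of x] sf[of x] Npos[of x] that by (simp_all add: field_simps)
  have flip: "p * cos x + q * sin x = - N x * cos x" "r * cos x + w * sin x = - N x * sin x"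
    if "f x - x = pi \<or> f x - x = - pi" for x
  proof -
    from that have "f x = x + pi \<or> f x = x - pi" by auto
    hence "cos (f x) = - cos x" "sin (f x) = - sin x" by auto
    thus "p * cos x + q * sin x = - N x * cos x" "r * cos x + w * sin x = - N x * sin x"
      using cf[of x] sf[of x] Npos[of x] by (simp_all add: field_simps)
  qed
  have noflip: False if "f x - x = pi \<or> f x - x = - pi" for x
    using eig_contra[OF dA' fixe[OF assms(3)] flip[OF that] Npos[of a] Npos[of x]] by simp
  define d where "d = (\<lambda>x. f x - x)"
  have dc: "isCont d x" for x unfolding d_def using cont by (intro continuous_intros)
  have da: "d a = 0" using assms(3) by (simp add: d_def)
  have bound: "\<bar>f x - x\<bar> < pi" for x
  proof (rule ccontr)
    assume "\<not> ?thesis"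
    hence h: "d x \<ge> pi \<or> d x \<le> - pi" by (auto simp: d_def)
    have "\<exists>y. d y = pi \<or> d y = - pi"
    proof (cases "a \<le> x")
      case True
      show ?thesis using h
      proof
        assume hx: "d x \<ge> pi"
        have "\<exists>y. a \<le> y \<and> y \<le> x \<and> d y = pi"
          by (rule IVT) (use da dc True hx pi_ge_zero in simp_all)
        thus ?thesis by blast
      next
        assume hx: "d x \<le> - pi"
        have "\<exists>y. a \<le> y \<and> y \<le> x \<and> d y = - pi"
          by (rule IVT2) (use da dc True hx pi_ge_zero in simp_all)
        thus ?thesis by blast
      qed
    next
      case False
      hence F: "x \<le> a" by simp
      show ?thesis using h
      proof
        assume hx: "d x \<ge> pi"
        have "\<exists>y. x \<le> y \<and> y \<le> a \<and> d y = pi"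
          by (rule IVT2) (use da dc F hx pi_ge_zero in simp_all)
        thus ?thesis by blast
      next
        assume hx: "d x \<le> - pi"
        have "\<exists>y. x \<le> y \<and> y \<le> a \<and> d y = - pi"
          by (rule IVT) (use da dc F hx pi_ge_zero in simp_all)
        thus ?thesis by blast
      qed
    qed
    thus False using noflip unfolding d_def by blast
  qed
  have per: "\<forall>x. f (x + pi) = f x + pi"
  proof
    fix x
    have Nx: "N (x + pi) = N x" unfolding N_def pibar_pi mv_neg by simp
    have "N x * (cos (f (x + pi)) + cos (f x)) = 0" using cf[of "x+pi"] cf[of x] Nx Npos[of x] by (simp add: field_simps)
    hence c1: "cos (f (x + pi)) = - cos (f x)" using Npos[of x] by (simp add: eq_neg_iff_add_eq_0)
    have "N x * (sin (f (x + pi)) + sin (f x)) = 0" using sf[of "x+pi"] sf[of x] Nx Npos[of x] by (simp add: field_simps)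
    hence s1: "sin (f (x + pi)) = - sin (f x)" using Npos[of x] by (simp add: eq_neg_iff_add_eq_0)
    define h where "h = f (x + pi) - pi - f x"
    have "cos h = (cos (f x))^2 + (sin (f x))^2"
      unfolding h_def by (simp add: cos_diff sin_diff c1 s1 power2_eq_square)
    hence "cos h = 1" by simp
    then obtain n :: int where hn: "h = of_int n * 2 * pi" using cos_one_2pi_int by blast
    have "\<bar>h\<bar> < 2 * pi" using bound[of x] bound[of "x + pi"] unfolding h_def by linarith
    hence "\<bar>of_int n\<bar> * (2 * pi) < 1 * (2 * pi)" using hn by (simp add: abs_mult)
    hence "\<bar>of_int n\<bar> < (1::real)" using pi_gt_zero by (simp only: mult_less_cancel_right)
    hence "n = 0" by linarith
    thus "f (x + pi) = f x + pi" using hn unfolding h_def by simp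
  qed
  have Qa: "Q a = 0" "Q a' = 0" "Q b = 0" "Q b' = 0" using QS assms(3,4,7,8) by auto
  have Qpos: "Q x > 0" if "\<forall>x\<in>{u<..<v}. f x > x" "x \<in> {u<..<v}" for x u v
  proof -
    have "0 < f x - x" "f x - x < pi" using that bound[of x] by auto
    hence "sin (f x - x) > 0" by (rule sin_gt_zero)
    thus ?thesis using QS[of x] Npos[of x] by simp
  qed
  have P1: "\<forall>x\<in>{a<..<b}. Q x > 0" using Qpos[OF assms(5)] by blast
  have P2: "\<forall>x\<in>{a'<..<b'}. Q x > 0" using Qpos[OF assms(9)] by blast
  obtain k :: int where ka: "a' = a + of_int k * pi"
    using left_congr[OF assms(2) Qa(1)[unfolded Q_def] P1[unfolded Q_def] assms(6) Qa(2)[unfolded Q_def] P2[unfolded Q_def]]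
    by blast
  have Qsh: "Q (x + of_int k * pi) = Q x" for x unfolding Q_def by (rule Q_per)
  have kb: "b' = b + of_int k * pi"
  proof (rule ccontr)
    assume ne: "b' \<noteq> b + of_int k * pi"
    show False
    proof (cases "b' < b + of_int k * pi")
      case True
      hence "b' - of_int k * pi \<in> {a<..<b}" using ka assms(6) by auto
      hence "Q (b' - of_int k * pi) > 0" using P1 by blast
      moreover have "Q (b' - of_int k * pi) = Q b'" using Qsh[of "b' - of_int k * pi"] by simp
      ultimately show False using Qa by simp
    next
      case False
      hence "b + of_int k * pi \<in> {a'<..<b'}" using ka ne assms(2) by auto
      hence "Q (b + of_int k * pi) > 0" using P2 by blast
      thus False using Qsh[of b] Qa by simp
    qed
  qed
  have U': "{a'<..<b'} = (\<lambda>y. y + of_int k * pi) ` {a<..<b}"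
  proof
    show "{a'<..<b'} \<subseteq> (\<lambda>y. y + of_int k * pi) ` {a<..<b}"
    proof
      fix y assume "y \<in> {a'<..<b'}"
      thus "y \<in> (\<lambda>y. y + of_int k * pi) ` {a<..<b}"
        using ka kb by (intro image_eqI[of _ _ "y - of_int k * pi"]) auto
    qed
  qed (use ka kb in auto)
  have iso: "proj_curves_iso f {a<..<b} {a'<..<b'}"
    by (rule iso_shift[OF bf _ _ U']) (use shift_int[OF per] in auto)
  show ?thesis using ka kb iso by blast
qed

end
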